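(* Let $\mathbb{F}$ be any field and $n$ a positive integer, and let $M\in\mathbb{F}^{2^n\times2^n}$ be either (i) $M=V_f$ for an arbitrary function $f:\{0,1\}^n\to\mathbb{F}$, or (ii) $M=M_1\otimes M_2\otimes\cdots\otimes M_n$ for arbitrary $M_1,\dots,M_n\in\mathbb{F}^{2\times2}$. Then for every integer $1\le k\le n$, $\mathcal{R}^{rc}_M\big(4\binom{n}{<k}\big)\le\binom{n-k}{\le n-2k}^2$ over $\mathbb{F}$.
   Context: $V_f[x,y]=f(x\vee y)$ for $x,y\in\{0,1\}^n$, with $\vee$ the bitwise OR. Row/column rigidity: $\mathcal{R}^{rc}_A(r)=\min\{\max(\mathrm{nnz_r}(B),\mathrm{nnz_c}(B)):\mathrm{rank}(A+B)\le r\}$, where $\mathrm{nnz_r}$, $\mathrm{nnz_c}$ are the maximum numbers of nonzero entries in a row, resp. column. $\binom{n}{<k}=\sum_{i=0}^{k-1}\binom{n}{i}$, $\binom{m}{\le j}=\sum_{i=0}^{j}\binom{m}{i}$ (empty sum $=0$). *)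

theory Defs
  imports "Jordan_Normal_Form.DL_Rank"
begin

definition mrank :: "'a::field mat \<Rightarrow> nat" where
  "mrank A = vec_space.rank (dim_row A) A"

definition nnz_r :: "'a::zero mat \<Rightarrow> nat" where
  "nnz_r B = Max ({card {j. j < dim_col B \<and> B $$ (i, j) \<noteq> 0} | i. i < dim_row B} \<union> {0})"

definition nnz_c :: "'a::zero mat \<Rightarrow> nat" where
  "nnz_c B = Max ({card {i. i < dim_row B \<and> B $$ (i, j) \<noteq> 0} | j. j < dim_col B} \<union> {0})"

definition rc_rigidity :: "'a::field mat \<Rightarrow> nat \<Rightarrow> nat" where
  "rc_rigidity A r = Inf {max (nnz_r B) (nnz_c B) | B.
      B \<in> carrier_mat (dim_row A) (dim_col A) \<and> mrank (A + B) \<le> r}"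

text \<open>V_f: rows/columns indexed by 0..2^n-1, read as bit vectors in {0,1}^n;
  bitwise OR of the indices is the join x \<or> y.\<close>
definition V_mat :: "nat \<Rightarrow> (nat \<Rightarrow> 'a) \<Rightarrow> 'a mat" where
  "V_mat n f = mat (2^n) (2^n) (\<lambda>(i, j). f (Bit_Operations.or i j))"

definition kron_mat :: "'a::times mat \<Rightarrow> 'a mat \<Rightarrow> 'a mat" where
  "kron_mat A B = mat (dim_row A * dim_row B) (dim_col A * dim_col B)
     (\<lambda>(i, j). A $$ (i div dim_row B, j div dim_col B) * B $$ (i mod dim_row B, j mod dim_col B))"

definition kron_list :: "'a::semiring_1 mat list \<Rightarrow> 'a mat" where
  "kron_list Ms = foldr kron_mat Ms (1\<^sub>m 1)"

definition binom_lt :: "nat \<Rightarrow> nat \<Rightarrow> nat" where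
  "binom_lt n k = (\<Sum>i<k. n choose i)"

text \<open>sum_{i=0}^{j} (m choose i), empty (=0) for j < 0.\<close>
definition binom_le :: "nat \<Rightarrow> int \<Rightarrow> nat" where
  "binom_le m j = (\<Sum>i\<in>{0..j}. m choose nat i)"

end

theory Submission imports Defs begin

definition bs :: "nat \<Rightarrow> (nat \<Rightarrow> bool) \<Rightarrow> nat \<Rightarrow> nat set" where
  "bs n a x = {i. i < n \<and> bit x i = a i}"

lemma bit_lt: "(x::nat) < 2^n \<Longrightarrow> bit x i \<Longrightarrow> i < n"
  by (metis bit_take_bit_iff take_bit_nat_eq_self)

lemma bs_sub: "bs n a x \<subseteq> {..<n}" by (auto simp: bs_def)

lemma bs_inj: "inj_on (bs n a) {..<2^n}"
proof (rule inj_onI)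
  fix x y assume x: "x \<in> {..<(2::nat)^n}" and y: "y \<in> {..<(2::nat)^n}" and e: "bs n a x = bs n a y"
  have "\<forall>i. bit x i = bit y i"
  proof
    fix i show "bit x i = bit y i"
    proof (cases "i < n")
      case True
      have "(i \<in> bs n a x) = (i \<in> bs n a y)" using e by simp
      then show ?thesis using True by (auto simp: bs_def)
    next
      case False then show ?thesis using bit_lt x y by auto
    qed
  qed
  then show "x = y" by (simp add: bit_eq_iff)
qed

lemma bs_bij: "bij_betw (bs n a) {..<2^n} (Pow {..<n})"
proof -
  have "bs n a ` {..<2^n} \<subseteq> Pow {..<n}" using bs_sub by auto
  moreover have "card (bs n a ` {..<2^n}) = card (Pow {..<(n::nat)})"
    using card_image[OF bs_inj] by (simp add: card_Pow)
  ultimately have "bs n a ` {..<2^n} = Pow {..<n}"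
    by (intro card_subset_eq) auto
  then show ?thesis using bs_inj by (simp add: bij_betw_def)
qed

lemma card_transfer:
  "card {x\<in>{..<2^n}. R (bs n a x)} = card {S\<in>Pow {..<n}. R S}"
proof -
  have im: "bs n a ` {..<2^n} = Pow {..<n}" using bs_bij[of n a] by (auto simp: bij_betw_def)
  have "bs n a ` {x\<in>{..<2^n}. R (bs n a x)} = {S\<in>Pow {..<n}. R S}"
  proof
    show "bs n a ` {x\<in>{..<2^n}. R (bs n a x)} \<subseteq> {S\<in>Pow {..<n}. R S}" using im by auto
    show "{S\<in>Pow {..<n}. R S} \<subseteq> bs n a ` {x\<in>{..<2^n}. R (bs n a x)}"
    proof
      fix S assume S: "S \<in> {S\<in>Pow {..<n}. R S}"
      then obtain z where "z \<in> {..<2^n}" "S = bs n a z" using im by (metis (no_types, lifting) imageE mem_Collect_eq)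
      then show "S \<in> bs n a ` {x\<in>{..<2^n}. R (bs n a x)}" using S by auto
    qed
  qed
  moreover have "inj_on (bs n a) {x\<in>{..<2^n}. R (bs n a x)}"
    using bs_inj by (rule inj_on_subset) auto
  ultimately show ?thesis by (metis card_image)
qed

lemma card_small_sets:
  "card {S\<in>Pow (W::nat set). card S < k} = (\<Sum>i<k. card W choose i)" if "finite W"
proof -
  have "{S\<in>Pow W. card S < k} = (\<Union>i<k. {S. S \<subseteq> W \<and> card S = i})" by auto
  moreover have "card (\<Union>i<k. {S. S \<subseteq> W \<and> card S = i}) = (\<Sum>i<k. card {S. S \<subseteq> W \<and> card S = i})"
    by (rule card_UN_disjoint) (use that in auto)
  ultimately show ?thesis using n_subsets[OF that] by simp
qed

lemma card_le_sets:
  "card {S\<in>Pow (W::nat set). card S \<le> j} = (\<Sum>i\<le>j. card W choose i)" if "finite W"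
proof -
  have "{S\<in>Pow W. card S \<le> j} = {S\<in>Pow W. card S < Suc j}" by auto
  then show ?thesis using card_small_sets[OF that, of "Suc j"] lessThan_Suc_atMost by simp
qed

lemma count_small: "card {x\<in>{..<2^n}. card (bs n a x) < k} = binom_lt n k"
  using card_transfer[of n "\<lambda>S. card S < k" a] card_small_sets[of "{..<n}" k]
  by (simp add: binom_lt_def)

lemma binom_le_nat: "binom_le m (int j) = (\<Sum>i\<le>j. m choose i)"
proof -
  have "{0..int j} = int ` {..j}" by (auto simp: image_iff intro!: bexI[of _ "nat _"])
  then show ?thesis unfolding binom_le_def
    by (simp add: sum.reindex inj_on_def)
qed

lemma count_big:
  assumes U: "U \<subseteq> {..<n}" and kU: "k \<le> card U"
  shows "card {x\<in>{..<2^n}. k \<le> card (bs n a x) \<and> bs n a x \<inter> U = {}}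
     \<le> binom_le (n - k) (int n - 2 * int k)"
proof -
  define W where "W = {..<n} - U"
  have fW: "finite W" by (simp add: W_def)
  have cW: "card W = n - card U" using U by (simp add: W_def card_Diff_subset finite_subset)
  have eq: "card {x\<in>{..<2^n}. k \<le> card (bs n a x) \<and> bs n a x \<inter> U = {}}
      = card {S\<in>Pow W. k \<le> card S}"
    unfolding card_transfer[of n "\<lambda>S. k \<le> card S \<and> S \<inter> U = {}"]
    by (rule arg_cong[of _ _ card]) (auto simp: W_def)
  show ?thesis
  proof (cases "k \<le> card W")
    case False
    have E: "{S\<in>Pow W. k \<le> card S} = {}"
    proof -
      { fix S assume "S \<subseteq> W" "k \<le> card S"
        then have False using card_mono[OF fW, of S] False by simp }
      then show ?thesis by auto
    qed
    have "card {x\<in>{..<2^n}. k \<le> card (bs n a x) \<and> bs n a x \<inter> U = {}} = 0"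
      unfolding eq E by simp
    then show ?thesis by (metis le0)
  next
    case True
    have n2k: "2*k \<le> n" using True cW kU U card_mono[of "{..<n}" U] by auto
    have inj: "inj_on (\<lambda>S. W - S) {S\<in>Pow W. k \<le> card S}"
      by (auto simp: inj_on_def)
    have img: "(\<lambda>S. W - S) ` {S\<in>Pow W. k \<le> card S} \<subseteq> {S\<in>Pow W. card S \<le> card W - k}"
      using fW by (auto simp: card_Diff_subset finite_subset)
    have "card {S\<in>Pow W. k \<le> card S} \<le> card {S\<in>Pow W. card S \<le> card W - k}"
      using card_mono[OF _ img] card_image[OF inj] fW by simp
    also have "\<dots> = (\<Sum>i\<le>card W - k. card W choose i)" by (rule card_le_sets[OF fW])
    also have "\<dots> \<le> (\<Sum>i\<le>n - 2*k. card W choose i)"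
      by (rule sum_mono2) (use cW kU in auto)
    also have "\<dots> \<le> (\<Sum>i\<le>n - 2*k. (n-k) choose i)"
      by (rule sum_mono, rule binomial_right_mono) (use cW kU in auto)
    also have "\<dots> = binom_le (n - k) (int n - 2 * int k)"
      using binom_le_nat[of "n-k" "n - 2*k"] n2k by (simp add: of_nat_diff)
    finally show ?thesis using eq by simp
  qed
qed

lemma mrank_sub: "A \<in> carrier_mat m c \<Longrightarrow> B \<in> carrier_mat m c \<Longrightarrow> mrank (A + B) \<le> mrank A + mrank B"
  unfolding mrank_def using vec_space.rank_subadditive[of A m c B] by simp

lemma mrank_rank1_sum:
  fixes A :: "'a::field mat"
  assumes "finite T" "A \<in> carrier_mat m c"
    "\<And>i j. i < m \<Longrightarrow> j < c \<Longrightarrow> A $$ (i,j) = (\<Sum>t\<in>T. f t i * g t j)"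
  shows "mrank A \<le> card T"
  using assms(1,2,3)
proof (induction T arbitrary: A rule: finite_induct)
  case empty
  then have "A = 0\<^sub>m m c" by (intro eq_matI) auto
  then show ?case unfolding mrank_def using vec_space.rank_0I[of m c] by simp
next
  case (insert t T)
  define A' where "A' = mat m c (\<lambda>(i,j). \<Sum>s\<in>T. f s i * g s j)"
  define R where "R = mat m c (\<lambda>(i,j). f t i * g t j)"
  have cA': "A' \<in> carrier_mat m c" and cR: "R \<in> carrier_mat m c" by (auto simp: A'_def R_def)
  have "A = A' + R" using insert by (intro eq_matI) (auto simp: A'_def R_def add.commute)
  moreover have "mrank A' \<le> card T" by (rule insert.IH[OF cA']) (auto simp: A'_def)
  moreover have "mrank R \<le> 1" unfolding mrank_def
    using vec_space.rank_le_1_product_entries[OF cR, of "f t" "g t"] cR by (auto simp: R_def)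
  ultimately have "mrank A \<le> card T + 1" using mrank_sub[OF cA' cR] by simp
  then show ?case using insert by simp
qed

lemma union_card_bound:
  assumes "finite T" "card T \<le> s" "\<And>t. t \<in> T \<Longrightarrow> card (Y t) \<le> s" "X \<subseteq> (\<Union>t\<in>T. Y t)"
    "\<And>t. t \<in> T \<Longrightarrow> finite (Y t)"
  shows "card X \<le> s^2"
proof -
  have "card X \<le> card (\<Union>t\<in>T. Y t)" using assms by (intro card_mono) auto
  also have "\<dots> \<le> (\<Sum>t\<in>T. card (Y t))" by (rule card_UN_le[OF assms(1)])
  also have "\<dots> \<le> (\<Sum>t\<in>T. s)" by (rule sum_mono) (use assms in auto)
  also have "\<dots> = card T * s" by simp
  also have "\<dots> \<le> s * s" using assms(2) by simp
  finally show ?thesis by (simp add: power2_eq_square)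
qed

lemma max_bound:
  fixes N :: nat
  assumes "\<And>i. i < N \<Longrightarrow> (g i::nat) \<le> b"
  shows "Max ({g i | i. i < N} \<union> {0}) \<le> b"
proof (rule Max.boundedI)
  have "{g i | i. i < N} = g ` {..<N}" by auto
  then show "finite ({g i | i. i < N} \<union> {0})" by simp
qed (use assms in auto)

theorem core:
  fixes M :: "'a::field mat" and P Q :: "nat \<Rightarrow> nat \<Rightarrow> 'a"
  assumes cM: "M \<in> carrier_mat (2^n) (2^n)"
    and MPQ: "\<And>x y. x < 2^n \<Longrightarrow> y < 2^n \<Longrightarrow> M $$ (x,y) = (\<Sum>t<2^n. P x t * Q t y)"
    and pP: "\<And>x t. x < 2^n \<Longrightarrow> t < 2^n \<Longrightarrow> P x t \<noteq> 0 \<Longrightarrow> bs n a x \<inter> bs n b t = {}"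
    and pQ: "\<And>t y. t < 2^n \<Longrightarrow> y < 2^n \<Longrightarrow> Q t y \<noteq> 0 \<Longrightarrow> bs n b t \<inter> bs n c y = {}"
  shows "rc_rigidity M (4 * binom_lt n k) \<le> (binom_le (n - k) (int n - 2 * int k))\<^sup>2"
proof -
  define N :: nat where "N = 2^n"
  define s where "s = binom_le (n - k) (int n - 2 * int k)"
  define wr where "wr x = card (bs n a x)" for x
  define wi where "wi x = card (bs n b x)" for x
  define wc where "wc x = card (bs n c x)" for x
  define S1 where "S1 x t = (if k \<le> wr x \<and> k \<le> wi t then P x t else 0)" for x t
  define S2 where "S2 t y = (if k \<le> wi t \<and> k \<le> wc y then Q t y else 0)" for t y
  define B where "B = mat N N (\<lambda>(x,y). - (\<Sum>t<N. S1 x t * S2 t y))"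
  define R where "R = {x\<in>{..<2^n}. card (bs n a x) < k}"
  define C where "C = {x\<in>{..<2^n}. card (bs n b x) < k}"
  define Rc where "Rc = {x\<in>{..<2^n}. card (bs n c x) < k}"
  define A1 where "A1 = mat N N (\<lambda>(x,y). \<Sum>x0\<in>R. (if x = x0 then 1 else 0) * (\<Sum>t<N. P x0 t * Q t y))"
  define A2 where "A2 = mat N N (\<lambda>(x,y). \<Sum>t\<in>C. (if k \<le> wr x then P x t else 0) * Q t y)"
  define A3 where "A3 = mat N N (\<lambda>(x,y). \<Sum>y0\<in>Rc.
      (\<Sum>t<N. (if k \<le> wr x \<and> k \<le> wi t then P x t * Q t y0 else 0)) * (if y = y0 then 1 else 0))"
  have cB: "B \<in> carrier_mat (dim_row M) (dim_col M)" using cM by (simp add: B_def N_def)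
  have c1: "A1 \<in> carrier_mat N N" and c2: "A2 \<in> carrier_mat N N" and c3: "A3 \<in> carrier_mat N N"
    by (auto simp: A1_def A2_def A3_def)
  have fR: "finite R" "finite C" "finite Rc" by (auto simp: R_def C_def Rc_def)
  have eq: "M + B = A1 + A2 + A3"
  proof (rule eq_matI)
    fix x y assume "x < dim_row (A1 + A2 + A3)" "y < dim_col (A1 + A2 + A3)"
    then have x: "x < N" and y: "y < N" by (auto simp: A3_def)
    have e1: "A1 $$ (x,y) = (\<Sum>t<N. if wr x < k then P x t * Q t y else 0)"
    proof -
      have "A1 $$ (x,y) = (\<Sum>x0\<in>R. (if x = x0 then 1 else 0) * (\<Sum>t<N. P x0 t * Q t y))"
        using x y by (simp add: A1_def)
      also have "\<dots> = (\<Sum>x0\<in>R. if x = x0 then (\<Sum>t<N. P x0 t * Q t y) else 0)"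
        by (rule sum.cong) auto
      also have "\<dots> = (if x \<in> R then (\<Sum>t<N. P x t * Q t y) else 0)"
        using fR by (simp add: sum.delta)
      also have "\<dots> = (\<Sum>t<N. if wr x < k then P x t * Q t y else 0)"
        using x by (simp add: R_def wr_def N_def)
      finally show ?thesis .
    qed
    have e2: "A2 $$ (x,y) = (\<Sum>t<N. if k \<le> wr x \<and> wi t < k then P x t * Q t y else 0)"
    proof -
      have "A2 $$ (x,y) = (\<Sum>t\<in>{t\<in>{..<N}. wi t < k}. (if k \<le> wr x then P x t else 0) * Q t y)"
        using x y by (simp add: A2_def C_def wi_def N_def)
      also have "\<dots> = (\<Sum>t<N. if k \<le> wr x \<and> wi t < k then P x t * Q t y else 0)"
        by (subst sum.inter_filter) (auto intro!: sum.cong)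
      finally show ?thesis .
    qed
    have e3: "A3 $$ (x,y) = (\<Sum>t<N. if k \<le> wr x \<and> k \<le> wi t \<and> wc y < k then P x t * Q t y else 0)"
    proof -
      have "A3 $$ (x,y) = (if y \<in> Rc then (\<Sum>t<N. (if k \<le> wr x \<and> k \<le> wi t then P x t * Q t y else 0)) else 0)"
        using x y fR by (simp add: A3_def sum.delta' if_distrib cong: if_cong)
      also have "\<dots> = (\<Sum>t<N. if k \<le> wr x \<and> k \<le> wi t \<and> wc y < k then P x t * Q t y else 0)"
        using y by (auto simp: Rc_def wc_def N_def intro!: sum.cong)
      finally show ?thesis .
    qed
    have "(M + B) $$ (x,y) = (\<Sum>t<N. P x t * Q t y) - (\<Sum>t<N. S1 x t * S2 t y)"
      using x y cM MPQ by (simp add: B_def N_def)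
    also have "\<dots> = (\<Sum>t<N. P x t * Q t y - S1 x t * S2 t y)" by (simp add: sum_subtractf)
    also have "\<dots> = (\<Sum>t<N. (if wr x < k then P x t * Q t y else 0)
        + (if k \<le> wr x \<and> wi t < k then P x t * Q t y else 0)
        + (if k \<le> wr x \<and> k \<le> wi t \<and> wc y < k then P x t * Q t y else 0))"
      by (rule sum.cong) (auto simp: S1_def S2_def)
    also have "\<dots> = A1 $$ (x,y) + A2 $$ (x,y) + A3 $$ (x,y)"
      unfolding e1 e2 e3 by (simp add: sum.distrib)
    also have "\<dots> = (A1 + A2 + A3) $$ (x,y)" using x y c1 c2 c3 by simp
    finally show "(M + B) $$ (x,y) = (A1 + A2 + A3) $$ (x,y)" .
  qed (use cB c1 c2 c3 cM in \<open>auto simp: N_def\<close>)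
  have r1: "mrank A1 \<le> card R"
    by (rule mrank_rank1_sum[OF fR(1) c1, of "\<lambda>x0 x. if x = x0 then 1 else 0" "\<lambda>x0 y. \<Sum>t<N. P x0 t * Q t y"])
       (simp add: A1_def)
  have r2: "mrank A2 \<le> card C"
    by (rule mrank_rank1_sum[OF fR(2) c2, of "\<lambda>t x. if k \<le> wr x then P x t else 0" "\<lambda>t y. Q t y"])
       (simp add: A2_def)
  have r3: "mrank A3 \<le> card Rc"
    by (rule mrank_rank1_sum[OF fR(3) c3, of "\<lambda>y0 x. \<Sum>t<N. (if k \<le> wr x \<and> k \<le> wi t then P x t * Q t y0 else 0)" "\<lambda>y0 y. if y = y0 then 1 else 0"])
       (simp add: A3_def)
  have "mrank (M + B) \<le> card R + card C + card Rc"
    using mrank_sub[OF add_carrier_mat[OF c2, of A1] c3] mrank_sub[OF c1 c2] r1 r2 r3 unfolding eq by linarith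
  also have "\<dots> \<le> 4 * binom_lt n k"
    using count_small[of n a k] count_small[of n b k] count_small[of n c k]
    by (simp add: R_def C_def Rc_def)
  finally have rk: "mrank (M + B) \<le> 4 * binom_lt n k" .
  have sp1: "card {t\<in>{..<N}. S1 x t \<noteq> 0} \<le> s" if x: "x < N" for x
  proof (cases "k \<le> wr x")
    case False then show ?thesis by (simp add: S1_def)
  next
    case True
    have "card {t\<in>{..<N}. S1 x t \<noteq> 0} \<le> card {t\<in>{..<2^n}. k \<le> card (bs n b t) \<and> bs n b t \<inter> bs n a x = {}}"
      by (rule card_mono) (use x pP in \<open>auto simp: S1_def N_def wi_def split: if_splits\<close>)
    also have "\<dots> \<le> s" unfolding s_def
      by (rule count_big[OF bs_sub]) (use True in \<open>simp add: wr_def\<close>)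
    finally show ?thesis .
  qed
  have sp2: "card {x\<in>{..<N}. S1 x t \<noteq> 0} \<le> s" if t: "t < N" for t
  proof (cases "k \<le> wi t")
    case False then show ?thesis by (simp add: S1_def)
  next
    case True
    have "card {x\<in>{..<N}. S1 x t \<noteq> 0} \<le> card {x\<in>{..<2^n}. k \<le> card (bs n a x) \<and> bs n a x \<inter> bs n b t = {}}"
      by (rule card_mono) (use t pP in \<open>auto simp: S1_def N_def wr_def split: if_splits\<close>)
    also have "\<dots> \<le> s" unfolding s_def
      by (rule count_big[OF bs_sub]) (use True in \<open>simp add: wi_def\<close>)
    finally show ?thesis .
  qed
  have sp3: "card {y\<in>{..<N}. S2 t y \<noteq> 0} \<le> s" if t: "t < N" for t
  proof (cases "k \<le> wi t")
    case False then show ?thesis by (simp add: S2_def)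
  next
    case True
    have "card {y\<in>{..<N}. S2 t y \<noteq> 0} \<le> card {y\<in>{..<2^n}. k \<le> card (bs n c y) \<and> bs n c y \<inter> bs n b t = {}}"
      by (rule card_mono) (use t pQ in \<open>auto simp: S2_def N_def wc_def split: if_splits\<close>)
    also have "\<dots> \<le> s" unfolding s_def
      by (rule count_big[OF bs_sub]) (use True in \<open>simp add: wi_def\<close>)
    finally show ?thesis .
  qed
  have sp4: "card {t\<in>{..<N}. S2 t y \<noteq> 0} \<le> s" if y: "y < N" for y
  proof (cases "k \<le> wc y")
    case False then show ?thesis by (simp add: S2_def)
  next
    case True
    have "card {t\<in>{..<N}. S2 t y \<noteq> 0} \<le> card {t\<in>{..<2^n}. k \<le> card (bs n b t) \<and> bs n b t \<inter> bs n c y = {}}"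
      by (rule card_mono) (use y pQ in \<open>auto simp: S2_def N_def wi_def split: if_splits\<close>)
    also have "\<dots> \<le> s" unfolding s_def
      by (rule count_big[OF bs_sub]) (use True in \<open>simp add: wc_def\<close>)
    finally show ?thesis .
  qed
  have nr: "nnz_r B \<le> s^2" unfolding nnz_r_def
  proof (rule max_bound)
    fix x assume x: "x < dim_row B"
    then have x': "x < N" by (simp add: B_def)
    show "card {j. j < dim_col B \<and> B $$ (x, j) \<noteq> 0} \<le> s^2"
    proof (rule union_card_bound[where T="{t\<in>{..<N}. S1 x t \<noteq> 0}" and Y="\<lambda>t. {y\<in>{..<N}. S2 t y \<noteq> 0}"])
      show "{j. j < dim_col B \<and> B $$ (x, j) \<noteq> 0} \<subseteq> (\<Union>t\<in>{t\<in>{..<N}. S1 x t \<noteq> 0}. {y\<in>{..<N}. S2 t y \<noteq> 0})"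
      proof
        fix y assume "y \<in> {j. j < dim_col B \<and> B $$ (x, j) \<noteq> 0}"
        then have y: "y < N" and nz: "(\<Sum>t<N. S1 x t * S2 t y) \<noteq> 0" using x' by (auto simp: B_def)
        then obtain t where "t < N" "S1 x t * S2 t y \<noteq> 0" by (meson lessThan_iff sum.neutral)
        then show "y \<in> (\<Union>t\<in>{t\<in>{..<N}. S1 x t \<noteq> 0}. {y\<in>{..<N}. S2 t y \<noteq> 0})" using y by auto
      qed
    qed (use sp1[OF x'] sp3 in auto)
  qed
  have nc: "nnz_c B \<le> s^2" unfolding nnz_c_def
  proof (rule max_bound)
    fix y assume y: "y < dim_col B"
    then have y': "y < N" by (simp add: B_def)
    show "card {i. i < dim_row B \<and> B $$ (i, y) \<noteq> 0} \<le> s^2"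
    proof (rule union_card_bound[where T="{t\<in>{..<N}. S2 t y \<noteq> 0}" and Y="\<lambda>t. {x\<in>{..<N}. S1 x t \<noteq> 0}"])
      show "{i. i < dim_row B \<and> B $$ (i, y) \<noteq> 0} \<subseteq> (\<Union>t\<in>{t\<in>{..<N}. S2 t y \<noteq> 0}. {x\<in>{..<N}. S1 x t \<noteq> 0})"
      proof
        fix x assume "x \<in> {i. i < dim_row B \<and> B $$ (i, y) \<noteq> 0}"
        then have x: "x < N" and nz: "(\<Sum>t<N. S1 x t * S2 t y) \<noteq> 0" using y' by (auto simp: B_def)
        then obtain t where "t < N" "S1 x t * S2 t y \<noteq> 0" by (meson lessThan_iff sum.neutral)
        then show "x \<in> (\<Union>t\<in>{t\<in>{..<N}. S2 t y \<noteq> 0}. {x\<in>{..<N}. S1 x t \<noteq> 0})" using x by auto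
      qed
    qed (use sp4[OF y'] sp2 in auto)
  qed
  have mem: "max (nnz_r B) (nnz_c B) \<in> {max (nnz_r B) (nnz_c B) | B.
      B \<in> carrier_mat (dim_row M) (dim_col M) \<and> mrank (M + B) \<le> 4 * binom_lt n k}"
    using cB rk by blast
  have "rc_rigidity M (4 * binom_lt n k) \<le> max (nnz_r B) (nnz_c B)"
    unfolding rc_rigidity_def by (rule cInf_lower[OF mem]) (rule bdd_belowI[of _ 0], simp)
  also have "\<dots> \<le> s^2" using nr nc by simp
  finally show ?thesis by (simp add: s_def)
qed

lemma bs_image: "bs n a ` {x\<in>{..<2^n}. R (bs n a x)} = {S\<in>Pow {..<n}. R S}"
proof -
  have im: "bs n a ` {..<2^n} = Pow {..<n}" using bs_bij[of n a] by (auto simp: bij_betw_def)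
  show ?thesis
  proof
    show "bs n a ` {x\<in>{..<2^n}. R (bs n a x)} \<subseteq> {S\<in>Pow {..<n}. R S}" using im by auto
    show "{S\<in>Pow {..<n}. R S} \<subseteq> bs n a ` {x\<in>{..<2^n}. R (bs n a x)}"
    proof
      fix S assume S: "S \<in> {S\<in>Pow {..<n}. R S}"
      then obtain z where "z \<in> {..<2^n}" "S = bs n a z" using im by (metis (no_types, lifting) imageE mem_Collect_eq)
      then show "S \<in> bs n a ` {x\<in>{..<2^n}. R (bs n a x)}" using S by auto
    qed
  qed
qed

lemma mobius:
  fixes F :: "nat set \<Rightarrow> 'a::ab_group_add"
  assumes "finite U"
  shows "\<exists>G. \<forall>W\<subseteq>U. F W = (\<Sum>T\<in>Pow W. G T)"
  using assms
proof (induction U arbitrary: F rule: finite_induct)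
  case empty
  show ?case by (rule exI[of _ F]) auto
next
  case (insert u U)
  obtain G1 where G1: "\<forall>W\<subseteq>U. F W = (\<Sum>T\<in>Pow W. G1 T)" using insert.IH by blast
  obtain G2 where G2: "\<forall>W\<subseteq>U. F (insert u W) - F W = (\<Sum>T\<in>Pow W. G2 T)"
    using insert.IH[of "\<lambda>W. F (insert u W) - F W"] by blast
  define G where "G T = (if u \<in> T then G2 (T - {u}) else G1 T)" for T
  have "F W = (\<Sum>T\<in>Pow W. G T)" if W: "W \<subseteq> insert u U" for W
  proof (cases "u \<in> W")
    case False
    then have "W \<subseteq> U" using W by auto
    moreover have "(\<Sum>T\<in>Pow W. G T) = (\<Sum>T\<in>Pow W. G1 T)"
      by (rule sum.cong) (use False in \<open>auto simp: G_def\<close>)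
    ultimately show ?thesis using G1 by simp
  next
    case True
    define W0 where "W0 = W - {u}"
    have W0: "W0 \<subseteq> U" "u \<notin> W0" "W = insert u W0" using W True insert.hyps by (auto simp: W0_def)
    have fin: "finite W0" using W0 insert.hyps finite_subset by blast
    have "(\<Sum>T\<in>Pow W. G T) = (\<Sum>T\<in>Pow W0. G T) + (\<Sum>T\<in>insert u ` Pow W0. G T)"
      unfolding W0(3) Pow_insert
      by (rule sum.union_disjoint) (use fin W0 in auto)
    also have "(\<Sum>T\<in>Pow W0. G T) = (\<Sum>T\<in>Pow W0. G1 T)"
      by (rule sum.cong) (use W0 in \<open>auto simp: G_def\<close>)
    also have "(\<Sum>T\<in>insert u ` Pow W0. G T) = (\<Sum>T\<in>Pow W0. G (insert u T))"
    proof -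
      have inj: "inj_on (insert u) (Pow W0)" using W0 by (auto simp: inj_on_def)
      show ?thesis using sum.reindex[OF inj, of G] by (simp add: comp_def)
    qed
    also have "\<dots> = (\<Sum>T\<in>Pow W0. G2 T)"
    proof (rule sum.cong)
      fix T assume "T \<in> Pow W0"
      then have "u \<notin> T" using W0 by auto
      then show "G (insert u T) = G2 T" by (simp add: G_def Diff_insert_absorb)
    qed simp
    finally have sumeq: "(\<Sum>T\<in>Pow W. G T) = (\<Sum>T\<in>Pow W0. G1 T) + (\<Sum>T\<in>Pow W0. G2 T)" .
    have e1: "F W0 = (\<Sum>T\<in>Pow W0. G1 T)" using G1 W0(1) by blast
    have e2: "F W - F W0 = (\<Sum>T\<in>Pow W0. G2 T)" using G2 W0(1) W0(3) by blast
    show ?thesis unfolding sumeq e1[symmetric] e2[symmetric] by simp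
  qed
  then show ?case by blast
qed

lemma or_lt: "(x::nat) < 2^n \<Longrightarrow> y < 2^n \<Longrightarrow> or x y < 2^n"
  by (metis take_bit_nat_eq_self_iff take_bit_or)

theorem caseV:
  fixes f :: "nat \<Rightarrow> 'a::field"
  shows "rc_rigidity (V_mat n f) (4 * binom_lt n k) \<le> (binom_le (n - k) (int n - 2 * int k))\<^sup>2"
proof -
  define a :: "nat \<Rightarrow> bool" where "a = (\<lambda>_. True)"
  define iv where "iv = the_inv_into {..<(2::nat)^n} (bs n a)"
  define F where "F W = f (iv ({..<n} - W))" for W
  obtain G where G: "\<forall>W\<subseteq>{..<n}. F W = (\<Sum>T\<in>Pow W. G T)" using mobius[of "{..<n}" F] by auto
  define P where "P x t = (if bs n a x \<inter> bs n a t = {} then G (bs n a t) else 0)" for x t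
  define Q where "Q t y = (if bs n a t \<inter> bs n a y = {} then (1::'a) else 0)" for t y
  show ?thesis
  proof (rule core[of _ n P Q a a a])
    show "V_mat n f \<in> carrier_mat (2^n) (2^n)" by (simp add: V_mat_def)
  next
    fix x y :: nat assume x: "x < 2^n" and y: "y < 2^n"
    have xy: "or x y < 2^n" using or_lt x y .
    have bsor: "bs n a (or x y) = bs n a x \<union> bs n a y" by (auto simp: bs_def a_def bit_or_iff)
    define W where "W = {..<n} - bs n a (or x y)"
    have Wn: "W \<subseteq> {..<n}" by (auto simp: W_def)
    have "{..<n} - W = bs n a (or x y)" using bs_sub by (auto simp: W_def)
    then have "F W = f (or x y)" unfolding F_def iv_def
      using the_inv_into_f_f[OF bs_inj, of "or x y" n a] xy by simp
    moreover have "F W = (\<Sum>T\<in>Pow W. G T)" using G Wn by blast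
    ultimately have "V_mat n f $$ (x,y) = (\<Sum>T\<in>Pow W. G T)" using x y by (simp add: V_mat_def)
    also have "\<dots> = (\<Sum>T\<in>{S\<in>Pow {..<n}. S \<subseteq> W}. G T)"
      by (rule sum.cong) (use Wn in auto)
    also have "\<dots> = (\<Sum>T\<in>bs n a ` {t\<in>{..<2^n}. bs n a t \<subseteq> W}. G T)"
      using bs_image[of n a "\<lambda>S. S \<subseteq> W"] by simp
    also have "\<dots> = (\<Sum>t\<in>{t\<in>{..<2^n}. bs n a t \<subseteq> W}. G (bs n a t))"
      by (rule sum.reindex_cong[OF inj_on_subset[OF bs_inj]]) auto
    also have "\<dots> = (\<Sum>t<2^n. if bs n a t \<subseteq> W then G (bs n a t) else 0)"
      using sum.inter_filter[of "{..<(2::nat)^n}" "\<lambda>t. G (bs n a t)" "\<lambda>t. bs n a t \<subseteq> W"] by simp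
    also have "\<dots> = (\<Sum>t<2^n. P x t * Q t y)"
    proof (rule sum.cong)
      fix t assume "t \<in> {..<(2::nat)^n}"
      have sub: "bs n a t \<subseteq> {..<n}" by (rule bs_sub)
      have "(bs n a t \<subseteq> W) = (bs n a x \<inter> bs n a t = {} \<and> bs n a t \<inter> bs n a y = {})"
        unfolding W_def bsor using sub by blast
      then show "(if bs n a t \<subseteq> W then G (bs n a t) else 0) = P x t * Q t y"
        by (simp add: P_def Q_def)
    qed simp
    finally show "V_mat n f $$ (x,y) = (\<Sum>t<2^n. P x t * Q t y)" .
  next
    fix x t assume "P x t \<noteq> 0" then show "bs n a x \<inter> bs n a t = {}" by (auto simp: P_def split: if_splits)
  next
    fix t y assume "Q t y \<noteq> 0" then show "bs n a t \<inter> bs n a y = {}" by (auto simp: Q_def split: if_splits)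
  qed
qed

definition bv :: "nat \<Rightarrow> nat \<Rightarrow> nat" where "bv x i = (if bit x i then 1 else 0)"

lemma sum_double:
  fixes F :: "nat \<Rightarrow> 'a::comm_monoid_add" and m :: nat
  shows "(\<Sum>z<2*m. F z) = (\<Sum>t<m. F (2*t) + F (2*t+1))"
  by (induction m) (simp_all add: algebra_simps)

lemma prod_sum_bits:
  fixes h :: "nat \<Rightarrow> nat \<Rightarrow> 'a::comm_semiring_1"
  shows "(\<Prod>i<n. \<Sum>b<2. h i b) = (\<Sum>t<2^n. \<Prod>i<n. h i (bv t i))"
proof (induction n arbitrary: h)
  case 0 then show ?case by simp
next
  case (Suc n)
  have bv0: "bv (2*t) 0 = 0" "bv (Suc (2*t)) 0 = 1" for t by (simp_all add: bv_def bit_0)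
  have bvS: "bv (2*t) (Suc i) = bv t i" "bv (Suc (2*t)) (Suc i) = bv t i" for t i
    by (simp_all add: bv_def bit_Suc)
  have "(\<Prod>i<Suc n. \<Sum>b<2. h i b) = (\<Sum>b<2. h 0 b) * (\<Prod>i<n. \<Sum>b<2. h (Suc i) b)"
    by (rule prod.lessThan_Suc_shift)
  also have "\<dots> = (\<Sum>b<2. h 0 b) * (\<Sum>t<2^n. \<Prod>i<n. h (Suc i) (bv t i))"
    using Suc.IH[of "\<lambda>i. h (Suc i)"] by simp
  also have "\<dots> = (\<Sum>t<2^n. h 0 0 * (\<Prod>i<n. h (Suc i) (bv t i)) + h 0 1 * (\<Prod>i<n. h (Suc i) (bv t i)))"
    by (simp add: numeral_2_eq_2 sum_distrib_left sum_distrib_right sum.distrib algebra_simps)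
  also have "\<dots> = (\<Sum>t<2^n. (\<Prod>i<Suc n. h i (bv (2*t) i)) + (\<Prod>i<Suc n. h i (bv (2*t+1) i)))"
    by (simp del: prod.lessThan_Suc add: prod.lessThan_Suc_shift bv0 bvS)
  also have "\<dots> = (\<Sum>z<2^Suc n. \<Prod>i<Suc n. h i (bv z i))"
    using sum_double[of "\<lambda>z. \<Prod>i<Suc n. h i (bv z i)" "2^n"] by simp
  finally show ?case .
qed

lemma kron_entry:
  assumes "\<forall>A\<in>set Ms. A \<in> carrier_mat 2 2"
  shows "kron_list Ms \<in> carrier_mat (2^length Ms) (2^length Ms) \<and>
    (\<forall>x y. x < 2^length Ms \<longrightarrow> y < 2^length Ms \<longrightarrow>
      kron_list Ms $$ (x,y) = (\<Prod>i<length Ms. (Ms!(length Ms - 1 - i)) $$ (bv x i, bv y i)))"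
  using assms
proof (induction Ms)
  case Nil
  then show ?case by (simp add: kron_list_def)
next
  case (Cons A Ms)
  define m where "m = length Ms"
  define K where "K = kron_list Ms"
  have A: "A \<in> carrier_mat 2 2" using Cons.prems by simp
  have K: "K \<in> carrier_mat (2^m) (2^m)" and Ke: "\<And>x y. x < 2^m \<Longrightarrow> y < 2^m \<Longrightarrow>
      K $$ (x,y) = (\<Prod>i<m. (Ms!(m - 1 - i)) $$ (bv x i, bv y i))"
    using Cons by (auto simp: K_def m_def)
  have kl: "kron_list (A # Ms) = kron_mat A K" by (simp add: kron_list_def K_def)
  have dv: "x div 2^m = bv x m" if "x < 2^Suc m" for x
  proof -
    have "x div 2^m < 2" using that by (simp add: less_mult_imp_div_less)
    then have "x div 2^m = 0 \<or> x div 2^m = 1" by auto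
    then show ?thesis by (auto simp: bv_def bit_iff_odd)
  qed
  have mv: "bv (x mod 2^m) i = bv x i" if "i < m" for x i
    using that by (simp add: bv_def bit_take_bit_iff flip: take_bit_eq_mod)
  have carr: "kron_list (A # Ms) \<in> carrier_mat (2^length (A#Ms)) (2^length (A#Ms))"
    unfolding kl kron_mat_def using A K by (simp add: m_def)
  have "kron_list (A # Ms) $$ (x,y) = (\<Prod>i<length (A#Ms). ((A#Ms)!(length (A#Ms) - 1 - i)) $$ (bv x i, bv y i))"
    if x: "x < 2^length (A#Ms)" and y: "y < 2^length (A#Ms)" for x y
  proof -
    have x': "x < 2^Suc m" and y': "y < 2^Suc m" using x y by (simp_all add: m_def)
    have "kron_list (A # Ms) $$ (x,y) = A $$ (x div 2^m, y div 2^m) * K $$ (x mod 2^m, y mod 2^m)"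
      unfolding kl kron_mat_def using A K x' y' by simp
    also have "\<dots> = A $$ (bv x m, bv y m) * (\<Prod>i<m. (Ms!(m - 1 - i)) $$ (bv x i, bv y i))"
      using dv[OF x'] dv[OF y'] Ke[of "x mod 2^m" "y mod 2^m"] mv by simp
    also have "\<dots> = (\<Prod>i<Suc m. ((A#Ms)!(Suc m - 1 - i)) $$ (bv x i, bv y i))"
    proof -
      have "(\<Prod>i<m. ((A#Ms)!(Suc m - 1 - i)) $$ (bv x i, bv y i)) = (\<Prod>i<m. (Ms!(m - 1 - i)) $$ (bv x i, bv y i))"
      proof (rule prod.cong)
        fix i assume "i \<in> {..<m}"
        then have "Suc m - 1 - i = Suc (m - 1 - i)" by auto
        then show "((A#Ms)!(Suc m - 1 - i)) $$ (bv x i, bv y i) = (Ms!(m - 1 - i)) $$ (bv x i, bv y i)" by simp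
      qed simp
      then show ?thesis by (simp add: mult.commute)
    qed
    finally show ?thesis by (simp add: m_def)
  qed
  then show ?case using carr by blast
qed

lemma factor2:
  fixes m :: "nat \<Rightarrow> nat \<Rightarrow> 'a::field"
  shows "\<exists>a c (p::nat\<Rightarrow>nat\<Rightarrow>'a) (q::nat\<Rightarrow>nat\<Rightarrow>'a). (\<forall>r<2. \<forall>s<2. m r s = (\<Sum>b<2. p r b * q b s)) \<and>
     (\<forall>r<2. p r 1 \<noteq> 0 \<longrightarrow> (r = 1) \<noteq> a) \<and> (\<forall>s<2. q 1 s \<noteq> 0 \<longrightarrow> (s = 1) \<noteq> c)"
proof (cases "\<forall>r<2. \<forall>s<2. m r s = 0")
  case True
  show ?thesis by (rule exI[of _ False], rule exI[of _ False], rule exI[of _ "\<lambda>_ _. 0"], rule exI[of _ "\<lambda>_ _. 0"])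
    (use True in auto)
next
  case False
  then obtain r0 s0 where r0: "r0 < 2" and s0: "s0 < 2" and d: "m r0 s0 \<noteq> 0" by auto
  define d where "d = m r0 s0"
  define p where "p (r::nat) (b::nat) = (if b = 0 then (if r = r0 then 1 else m r s0 / d) else (if r = r0 then 0 else 1))" for r b
  define q where "q (b::nat) (s::nat) = (if b = 0 then m r0 s else (if s = s0 then 0 else m (1 - r0) s - m (1 - r0) s0 * m r0 s / d))" for b s
  have rr: "r = r0 \<or> r = 1 - r0" if "r < 2" for r using that r0 by auto
  have ss: "s = s0 \<or> s = 1 - s0" if "s < 2" for s using that s0 by auto
  have eq: "m r s = (\<Sum>b<2. p r b * q b s)" if r: "r < 2" and s: "s < 2" for r s
  proof -
    have sum2: "(\<Sum>b<2. p r b * q b s) = p r 0 * q 0 s + p r 1 * q 1 s" by (simp add: numeral_2_eq_2)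
    have "m r s = p r 0 * q 0 s + p r 1 * q 1 s"
    proof (cases "r = r0")
      case True then show ?thesis by (simp add: p_def q_def)
    next
      case rne: False
      then have r1: "r = 1 - r0" using rr[OF r] by auto
      show ?thesis
      proof (cases "s = s0")
        case True then show ?thesis using rne d by (simp add: p_def q_def d_def)
      next
        case False
        have "p r 0 * q 0 s + p r 1 * q 1 s = m r s0 / d * m r0 s + (m r s - m r s0 * m r0 s / d)"
          using rne False r1 by (simp add: p_def q_def)
        also have "\<dots> = m r s" by (simp add: field_simps)
        finally show ?thesis by simp
      qed
    qed
    then show ?thesis using sum2 by simp
  qed
  have pat1: "\<forall>r<2. p r 1 \<noteq> 0 \<longrightarrow> (r = 1) \<noteq> (r0 = 1)" using r0 by (auto simp: p_def)
  have pat2: "\<forall>s<2. q 1 s \<noteq> 0 \<longrightarrow> (s = 1) \<noteq> (s0 = 1)" using s0 by (auto simp: q_def)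
  show ?thesis using eq pat1 pat2 by blast
qed

theorem caseK:
  fixes Ms :: "'a::field mat list"
  assumes len: "length Ms = n" and sq: "\<forall>A\<in>set Ms. A \<in> carrier_mat 2 2"
  shows "rc_rigidity (kron_list Ms) (4 * binom_lt n k) \<le> (binom_le (n - k) (int n - 2 * int k))\<^sup>2"
proof -
  define mi where "mi i r s = (Ms!(n-1-i)) $$ (r,s)" for i r s
  have KE: "kron_list Ms \<in> carrier_mat (2^n) (2^n)"
    "\<And>x y. x < 2^n \<Longrightarrow> y < 2^n \<Longrightarrow> kron_list Ms $$ (x,y) = (\<Prod>i<n. mi i (bv x i) (bv y i))"
    using kron_entry[OF sq] len by (auto simp: mi_def)
  have ex: "\<forall>i. \<exists>a c (p::nat\<Rightarrow>nat\<Rightarrow>'a) (q::nat\<Rightarrow>nat\<Rightarrow>'a). (\<forall>r<2. \<forall>s<2. mi i r s = (\<Sum>b<2. p r b * q b s)) \<and>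
     (\<forall>r<2. p r 1 \<noteq> 0 \<longrightarrow> (r = 1) \<noteq> a) \<and> (\<forall>s<2. q 1 s \<noteq> 0 \<longrightarrow> (s = 1) \<noteq> c)"
    using factor2 by blast
  obtain aa where ex1: "\<forall>i. \<exists>c (p::nat\<Rightarrow>nat\<Rightarrow>'a) (q::nat\<Rightarrow>nat\<Rightarrow>'a). (\<forall>r<2. \<forall>s<2. mi i r s = (\<Sum>b<2. p r b * q b s)) \<and>
     (\<forall>r<2. p r 1 \<noteq> 0 \<longrightarrow> (r = 1) \<noteq> aa i) \<and> (\<forall>s<2. q 1 s \<noteq> 0 \<longrightarrow> (s = 1) \<noteq> c)"
    using choice[OF ex] by blast
  obtain cc where ex2: "\<forall>i. \<exists>(p::nat\<Rightarrow>nat\<Rightarrow>'a) (q::nat\<Rightarrow>nat\<Rightarrow>'a). (\<forall>r<2. \<forall>s<2. mi i r s = (\<Sum>b<2. p r b * q b s)) \<and>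
     (\<forall>r<2. p r 1 \<noteq> 0 \<longrightarrow> (r = 1) \<noteq> aa i) \<and> (\<forall>s<2. q 1 s \<noteq> 0 \<longrightarrow> (s = 1) \<noteq> cc i)"
    using choice[OF ex1] by blast
  obtain pp where ex3: "\<forall>i. \<exists>(q::nat\<Rightarrow>nat\<Rightarrow>'a). (\<forall>r<2. \<forall>s<2. mi i r s = (\<Sum>b<2. pp i r b * q b s)) \<and>
     (\<forall>r<2. pp i r 1 \<noteq> 0 \<longrightarrow> (r = 1) \<noteq> aa i) \<and> (\<forall>s<2. q 1 s \<noteq> 0 \<longrightarrow> (s = 1) \<noteq> cc i)"
    using choice[OF ex2] by blast
  obtain qq where H: "\<forall>i. (\<forall>r<2. \<forall>s<2. mi i r s = (\<Sum>b<2. pp i r b * qq i b s)) \<and>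
     (\<forall>r<2. pp i r 1 \<noteq> 0 \<longrightarrow> (r = 1) \<noteq> aa i) \<and> (\<forall>s<2. qq i 1 s \<noteq> 0 \<longrightarrow> (s = 1) \<noteq> cc i)"
    using choice[OF ex3] by blast
  have bv2: "bv x i < 2" for x i by (simp add: bv_def)
  have bv1: "(bv x i = 1) = bit x i" for x i by (simp add: bv_def)
  define P where "P x t = (\<Prod>i<n. pp i (bv x i) (bv t i))" for x t
  define Q where "Q t y = (\<Prod>i<n. qq i (bv t i) (bv y i))" for t y
  show ?thesis
  proof (rule core[of _ n P Q aa "\<lambda>_. True" cc])
    show "kron_list Ms \<in> carrier_mat (2^n) (2^n)" by (rule KE(1))
  next
    fix x y :: nat assume x: "x < 2^n" and y: "y < 2^n"
    have "kron_list Ms $$ (x,y) = (\<Prod>i<n. mi i (bv x i) (bv y i))" by (rule KE(2)[OF x y])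
    also have "\<dots> = (\<Prod>i<n. \<Sum>b<2. pp i (bv x i) b * qq i b (bv y i))"
      by (rule prod.cong) (use H bv2 in auto)
    also have "\<dots> = (\<Sum>t<2^n. \<Prod>i<n. pp i (bv x i) (bv t i) * qq i (bv t i) (bv y i))"
      by (rule prod_sum_bits)
    also have "\<dots> = (\<Sum>t<2^n. P x t * Q t y)"
      by (simp add: P_def Q_def prod.distrib)
    finally show "kron_list Ms $$ (x,y) = (\<Sum>t<2^n. P x t * Q t y)" .
  next
    fix x t assume nz: "P x t \<noteq> 0"
    show "bs n aa x \<inter> bs n (\<lambda>_. True) t = {}"
    proof (rule ccontr)
      assume "bs n aa x \<inter> bs n (\<lambda>_. True) t \<noteq> {}"
      then obtain i where i: "i < n" "bit x i = aa i" "bit t i" by (auto simp: bs_def)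
      have "pp i (bv x i) (bv t i) \<noteq> 0" using nz i(1) by (auto simp: P_def)
      then have "pp i (bv x i) 1 \<noteq> 0" using i(3) by (simp add: bv_def)
      then have "(bv x i = 1) \<noteq> aa i" using H bv2 by blast
      then show False using i(2) bv1 by simp
    qed
  next
    fix t y assume nz: "Q t y \<noteq> 0"
    show "bs n (\<lambda>_. True) t \<inter> bs n cc y = {}"
    proof (rule ccontr)
      assume "bs n (\<lambda>_. True) t \<inter> bs n cc y \<noteq> {}"
      then obtain i where i: "i < n" "bit y i = cc i" "bit t i" by (auto simp: bs_def)
      have "qq i (bv t i) (bv y i) \<noteq> 0" using nz i(1) by (auto simp: Q_def)
      then have "qq i 1 (bv y i) \<noteq> 0" using i(3) by (simp add: bv_def)
      then have "(bv y i = 1) \<noteq> cc i" using H bv2 by blast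
      then show False using i(2) bv1 by simp
    qed
  qed
qed

theorem mainTheorem13:
  fixes n k :: nat and M :: "'a::field mat"
  assumes "1 \<le> n" and "1 \<le> k" and "k \<le> n"
    and "(\<exists>f :: nat \<Rightarrow> 'a. M = V_mat n f) \<or>
         (\<exists>Ms. length Ms = n \<and> (\<forall>A\<in>set Ms. A \<in> carrier_mat 2 2) \<and> M = kron_list Ms)"
  shows "rc_rigidity M (4 * binom_lt n k) \<le> (binom_le (n - k) (int n - 2 * int k))\<^sup>2"
  using assms(4) caseV caseK by blast

end
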